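(* Let $A$ be a finite alphabet containing a distinguished element $0$, let $\nu$ be a shift-invariant probability measure on $A^{\mathbb{Z}}$, and let $\mathbf{Y}=(A^{\mathbb{Z}},\mathcal{B},\nu,S)$ with $S$ the left shift. Let $\tau$ be the cellular automaton $\tau((a_n)_n)=(\tau_0(a_n,a_{n+1}))_n$ with $\tau_0(\alpha_1,\alpha_2)=\alpha_1$ if $\alpha_1=\alpha_2$ and $0$ otherwise, and let $\xi$ be the coordinate process on $\mathbf{Y}$. Then for every $n\ge1$, $$h_\nu(\tau^n\xi,S)\le\frac{\log(\#A\, n^2)}{n}.$$
   Context: The coordinate process is $\xi_i(a)=a_i$; $\tau^n\xi$ is the process $((\tau^n a)_i)_{i\in\mathbb{Z}}$, i.e. the $S$-process generated by the finite-valued random variable $a\mapsto(\tau^na)_0$. For a finite-valued process $\eta$, $h_\nu(\eta,S)=\lim_n\frac1nH_\nu(\eta_{[0,n]})$ with $H_\nu$ Shannon entropy. *)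

theory Defs
  imports "HOL-Probability.Probability"
begin

definition lshift :: "(int \<Rightarrow> 'a) \<Rightarrow> int \<Rightarrow> 'a" where
  "lshift a = (\<lambda>i. a (i + 1))"

definition ca_tau :: "'a \<Rightarrow> (int \<Rightarrow> 'a) \<Rightarrow> int \<Rightarrow> 'a" where
  "ca_tau z a = (\<lambda>i. if a i = a (i + 1) then a i else z)"

definition shannon_entropy :: "'b measure \<Rightarrow> ('b \<Rightarrow> 'c) \<Rightarrow> real" where
  "shannon_entropy M X =
     - (\<Sum>x \<in> X ` space M. measure M (X -` {x} \<inter> space M) * ln (measure M (X -` {x} \<inter> space M)))"

definition process_entropy :: "'b measure \<Rightarrow> ('b \<Rightarrow> 'b) \<Rightarrow> ('b \<Rightarrow> 'c) \<Rightarrow> real" where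
  "process_entropy M S f =
     lim (\<lambda>m::nat. shannon_entropy M (\<lambda>a. \<lambda>i\<in>{0..m}. f ((S ^^ i) a)) / real m)"

end

theory Submission
  imports Defs
begin


lemma (in prob_space) sh_eq_entropy:
  assumes "simple_function M X"
  shows "shannon_entropy M X = entropy (exp 1) (count_space (X ` space M)) X"
proof -
  interpret information_space M "exp 1"
    by (simp add: information_space_def information_space_axioms_def prob_space_axioms)
  have "entropy (exp 1) (count_space (X ` space M)) X = - (\<Sum>x\<in>X`space M. prob (X -` {x} \<inter> space M) * log (exp 1) (prob (X -` {x} \<inter> space M)))"
    by (rule entropy_simple_distributed[OF simple_distributedI[OF assms measure_nonneg refl]])
  then show ?thesis
    unfolding shannon_entropy_def by (simp add: log_def)
qed

lemma (in prob_space) sh_le_card: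
  assumes "simple_function M X"
  shows "shannon_entropy M X \<le> ln (card (X ` space M))"
proof -
  interpret information_space M "exp 1"
    by (simp add: information_space_def information_space_axioms_def prob_space_axioms)
  show ?thesis
    using entropy_le_card[OF simple_distributedI[OF assms measure_nonneg refl]]
    by (simp add: sh_eq_entropy[OF assms] log_def)
qed

lemma (in prob_space) sh_pair:
  assumes "simple_function M X" "simple_function M Y"
  shows "shannon_entropy M (\<lambda>x. (X x, Y x)) \<le> shannon_entropy M X + shannon_entropy M Y"
proof -
  interpret information_space M "exp 1"
    by (simp add: information_space_def information_space_axioms_def prob_space_axioms)
  have p: "simple_function M (\<lambda>x. (X x, Y x))" using assms simple_function_Pair by blast
  show ?thesis
    unfolding sh_eq_entropy[OF assms(1)] sh_eq_entropy[OF assms(2)] sh_eq_entropy[OF p]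
    using entropy_chain_rule[OF assms(1,2)] conditional_entropy_less_eq_entropy[OF assms(2,1)]
    by simp
qed

lemma (in prob_space) sh_comp:
  assumes "simple_function M X"
  shows "shannon_entropy M (\<lambda>x. f (X x)) \<le> shannon_entropy M X"
proof -
  interpret information_space M "exp 1"
    by (simp add: information_space_def information_space_axioms_def prob_space_axioms)
  have p: "simple_function M (\<lambda>x. f (X x))" using assms simple_function_compose1 by blast
  have q: "simple_function M (f \<circ> X)" using assms by simp
  show ?thesis
    unfolding sh_eq_entropy[OF assms] sh_eq_entropy[OF p]
    using entropy_partition[OF assms, of f] conditional_entropy_nonneg[OF assms q]
    by (simp add: comp_def)
qed

lemma sh_nonneg:
  assumes "prob_space M"
  shows "shannon_entropy M X \<ge> 0"
proof -
  interpret prob_space M by fact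
  have "measure M A * ln (measure M A) \<le> 0" for A
  proof (cases "measure M A = 0")
    case False
    then have "measure M A > 0" using measure_nonneg[of M A] by linarith
    moreover have "ln (measure M A) \<le> 0" using prob_le_1 \<open>measure M A > 0\<close> by simp
    ultimately show ?thesis by (simp add: mult_nonneg_nonpos)
  qed simp
  then show ?thesis unfolding shannon_entropy_def neg_0_le_iff_le by (intro sum_nonpos) auto
qed

lemma sh_shift:
  assumes "prob_space M" "simple_function M X" "S \<in> measurable M M" "distr M M S = M"
  shows "shannon_entropy M (\<lambda>x. X (S x)) = shannon_entropy M X"
proof -
  have im: "(\<lambda>x. X (S x)) ` space M \<subseteq> X ` space M"
    using measurable_space[OF assms(3)] by auto
  have fin: "finite (X ` space M)" using simple_functionD(1)[OF assms(2)] .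
  have meas: "measure M ((\<lambda>x. X (S x)) -` {y} \<inter> space M) = measure M (X -` {y} \<inter> space M)"
    if "y \<in> X ` space M" for y
  proof -
    have A: "X -` {y} \<inter> space M \<in> sets M" using simple_functionD(2)[OF assms(2)] .
    have "measure M ((\<lambda>x. X (S x)) -` {y} \<inter> space M) = measure M (S -` (X -` {y} \<inter> space M) \<inter> space M)"
      using measurable_space[OF assms(3)] by (intro arg_cong[where f="measure M"]) auto
    also have "\<dots> = measure (distr M M S) (X -` {y} \<inter> space M)"
      using A assms(3) by (simp add: measure_distr)
    also have "\<dots> = measure M (X -` {y} \<inter> space M)" by (simp only: assms(4))
    finally show ?thesis .
  qed
  have "shannon_entropy M (\<lambda>x. X (S x)) = - (\<Sum>y\<in>X ` space M. measure M ((\<lambda>x. X (S x)) -` {y} \<inter> space M) * ln (measure M ((\<lambda>x. X (S x)) -` {y} \<inter> space M)))"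
    unfolding shannon_entropy_def
  proof (rule arg_cong[where f=uminus], rule sum.mono_neutral_left[OF fin im])
    show "\<forall>i\<in>X ` space M - (\<lambda>x. X (S x)) ` space M. measure M ((\<lambda>x. X (S x)) -` {i} \<inter> space M) * ln (measure M ((\<lambda>x. X (S x)) -` {i} \<inter> space M)) = 0"
    proof
      fix i assume "i \<in> X ` space M - (\<lambda>x. X (S x)) ` space M"
      then have "(\<lambda>x. X (S x)) -` {i} \<inter> space M = {}" by blast
      then show "measure M ((\<lambda>x. X (S x)) -` {i} \<inter> space M) * ln (measure M ((\<lambda>x. X (S x)) -` {i} \<inter> space M)) = 0" by simp
    qed
  qed
  also have "\<dots> = shannon_entropy M X"
    unfolding shannon_entropy_def using meas by simp
  finally show ?thesis .
qed


lemma fekete: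
  fixes b :: "nat \<Rightarrow> real"
  assumes sub: "\<And>m k. b (m + k) \<le> b m + b k" and nn: "\<And>m. b m \<ge> 0"
  shows "(\<lambda>m. b m / m) \<longlonglongrightarrow> Inf ((\<lambda>m. b m / m) ` {1..})"
proof (rule order_tendstoI)
  let ?L = "Inf ((\<lambda>m. b m / m) ` {1..})"
  have bdd: "bdd_below ((\<lambda>m. b m / m) ` {1..})"
    by (rule bdd_belowI[of _ 0]) (auto simp: nn)
  have low: "?L \<le> b m / m" if "m \<ge> 1" for m
    using that bdd by (intro cInf_lower) auto
  fix a assume aL: "a < ?L"
  show "\<forall>\<^sub>F m in sequentially. a < b m / m"
    using eventually_ge_at_top[of 1] by eventually_elim (use low aL in force)
next
  let ?L = "Inf ((\<lambda>m. b m / m) ` {1..})"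
  have bdd: "bdd_below ((\<lambda>m. b m / m) ` {1..})"
    by (rule bdd_belowI[of _ 0]) (auto simp: nn)
  fix a assume "?L < a"
  then obtain k where k: "k \<ge> 1" "b k / k < a"
    using cInf_less_iff[OF _ bdd] by auto
  define e where "e = a - b k / k"
  have e: "e > 0" using k e_def by simp
  define B where "B = Max (b ` {..<k})"
  have Bge: "b r \<le> B" if "r < k" for r unfolding B_def using that by (intro Max_ge) auto
  have B0: "B \<ge> 0" using Bge[of 0] nn[of 0] k by simp
  have iter: "b (q * k + r) \<le> q * b k + b r" for q r
  proof (induction q)
    case (Suc q)
    have "b (Suc q * k + r) = b (k + (q * k + r))" by (simp add: algebra_simps)
    also have "\<dots> \<le> b k + b (q * k + r)" by (rule sub)
    finally show ?case using Suc by (simp add: algebra_simps)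
  qed simp
  have "\<forall>\<^sub>F m in sequentially. B / m < e"
  proof -
    have "(\<lambda>m. B / real m) \<longlonglongrightarrow> 0" by (rule tendsto_divide_0[OF tendsto_const]) (rule filterlim_at_top_imp_at_infinity[OF filterlim_real_sequentially])
    then show ?thesis using e by (rule order_tendstoD)
  qed
  then show "\<forall>\<^sub>F m in sequentially. b m / m < a"
    using eventually_ge_at_top[of 1]
  proof eventually_elim
    case (elim m)
    define q where "q = m div k" define r where "r = m mod k"
    have m: "m = q * k + r" unfolding q_def r_def by simp
    have r: "r < k" unfolding r_def using k by simp
    have mpos: "real m > 0" using elim by simp
    have "b m \<le> q * b k + B" using iter[of q r] Bge[OF r] m by simp
    also have "q * b k = (real (q * k) / k) * b k" using k by simp
    also have "\<dots> \<le> real m / k * b k"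
      using nn[of k] k m by (intro mult_right_mono divide_right_mono) auto
    finally have "b m / m \<le> b k / k + B / m"
      using mpos by (simp add: field_simps)
    then show ?case using elim e_def by simp
  qed
qed


lemma lshift_pow: "(lshift ^^ k) a = (\<lambda>j. a (j + int k))"
  by (induction k) (auto simp: lshift_def algebra_simps)

lemma tau_shift: "ca_tau z (lshift a) = lshift (ca_tau z a)"
  by (simp add: ca_tau_def lshift_def add_ac)

lemma taun_shift: "(ca_tau z ^^ n) (lshift a) = lshift ((ca_tau z ^^ n) a)"
  by (induction n) (auto simp: tau_shift)

lemma taun_shiftk: "(ca_tau z ^^ n) ((lshift ^^ k) a) = (lshift ^^ k) ((ca_tau z ^^ n) a)"
  by (induction k) (auto simp: taun_shift)

lemma taun_closed:
  "(ca_tau z ^^ n) a i = (if (\<forall>t\<le>n. a (i + int t) = a i) then a i else z)"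
proof (induction n arbitrary: i)
  case 0
  then show ?case by simp
next
  case (Suc n)
  note IH = Suc.IH
  let ?T = "(ca_tau z ^^ n) a"
  have L: "(ca_tau z ^^ Suc n) a i = (if ?T i = ?T (i+1) then ?T i else z)"
    by (simp add: ca_tau_def)
  show ?case
  proof (cases "\<forall>t\<le>Suc n. a (i + int t) = a i")
    case True
    have "?T i = a i" using IH[of i] True by auto
    moreover have "?T (i+1) = a i"
    proof -
      have "a (i + 1 + int t) = a (i+1)" if "t \<le> n" for t
        using True[rule_format, of "Suc t"] True[rule_format, of 1] that by (simp add: add_ac)
      then show ?thesis using IH[of "i+1"] True[rule_format, of 1] by (simp add: add_ac)
    qed
    ultimately show ?thesis using L True by simp
  next
    case False
    show ?thesis
    proof (cases "?T i = z")
      case True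
      have "(ca_tau z ^^ Suc n) a i = z" using L True by simp
      then show ?thesis unfolding if_not_P[OF False] .
    next
      case Tz: False
      then have all: "\<forall>t\<le>n. a (i + int t) = a i" and Ti: "?T i = a i" using IH[of i] by (auto split: if_splits)
      from False obtain t where t: "t \<le> Suc n" "a (i + int t) \<noteq> a i" by blast
      have "t = Suc n"
      proof (rule ccontr)
        assume "t \<noteq> Suc n" then have "t \<le> n" using t(1) by simp
        then show False using all t(2) by blast
      qed
      then have ne: "a (i + int (Suc n)) \<noteq> a i" using t(2) by simp
      have "?T (i+1) \<noteq> ?T i"
      proof (cases n)
        case 0
        have "?T (i+1) = a (i+1)" "?T i = a i" using 0 by simp_all
        moreover have "a (i+1) \<noteq> a i" using ne 0 by simp
        ultimately show ?thesis by simp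
      next
        case (Suc n')
        have nn: "\<not> (\<forall>t\<le>n. a (i + 1 + int t) = a (i+1))"
        proof
          assume H: "\<forall>t\<le>n. a (i + 1 + int t) = a (i+1)"
          have "a (i + 1 + int n) = a (i+1)" using H[rule_format, of n] by simp
          moreover have "a (i + int 1) = a i" using all[rule_format, of 1] Suc by simp
          ultimately show False using ne by (simp add: add_ac)
        qed
        have "?T (i+1) = z" by (simp only: IH[of "i+1"] if_not_P[OF nn])
        then show ?thesis using Tz by simp
      qed
      then have "(ca_tau z ^^ Suc n) a i = z" using L by simp
      then show ?thesis unfolding if_not_P[OF False] .
    qed
  qed
qed



lemma meas_coord:
  fixes z :: "'a::finite"
  shows "(\<lambda>a. (ca_tau z ^^ n) a j) \<in> measurable (PiM UNIV (\<lambda>_::int. count_space (UNIV::'a set))) (count_space UNIV)"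
  unfolding taun_closed
  by measurable

lemma PiE_single_eq:
  assumes "x \<in> extensional I"
  shows "{x} = PiE I (\<lambda>i. {x i})"
  using PiE_singleton[OF assms] by simp

lemma simple_block:
  fixes z :: "'a::finite" and \<nu> :: "(int \<Rightarrow> 'a) measure"
  assumes sets: "sets \<nu> = sets (PiM UNIV (\<lambda>_. count_space UNIV))" and I: "finite I"
  shows "simple_function \<nu> (\<lambda>a. \<lambda>i\<in>I. (ca_tau z ^^ n) a (g i))"
proof -
  let ?G = "\<lambda>a. \<lambda>i\<in>I. (ca_tau z ^^ n) a (g i)"
  have M: "?G \<in> measurable \<nu> (PiM I (\<lambda>_. count_space (UNIV::'a set)))"
  proof (rule measurable_restrict)
    fix i assume "i \<in> I"
    show "(\<lambda>a. (ca_tau z ^^ n) a (g i)) \<in> measurable \<nu> (count_space UNIV)"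
      using meas_coord[where z=z and n=n and j="g i"] measurable_cong_sets[OF sets refl] by blast
  qed
  have sub: "?G ` space \<nu> \<subseteq> PiE I (\<lambda>_. UNIV)" by auto
  have fin: "finite (?G ` space \<nu>)"
    by (rule finite_subset[OF sub]) (simp add: finite_PiE I)
  have "?G -` {x} \<inter> space \<nu> \<in> sets \<nu>" if "x \<in> ?G ` space \<nu>" for x
  proof -
    have "x \<in> extensional I" using that sub by (auto simp: PiE_def)
    then have e: "{x} = PiE I (\<lambda>i. {x i})" by (rule PiE_single_eq)
    have "{x} \<in> sets (PiM I (\<lambda>_. count_space (UNIV::'a set)))"
      unfolding e by (intro sets_PiM_I_finite I) auto
    then show ?thesis using measurable_sets[OF M] by blast
  qed
  then show ?thesis unfolding simple_function_def using fin by blast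
qed

lemma run_lemma:
  assumes hi: "(ca_tau z ^^ n) a i \<noteq> z" and hj: "(ca_tau z ^^ n) a j \<noteq> z"
    and ik: "i \<le> k" and kj: "k \<le> j" and ji: "j \<le> i + int n"
  shows "(ca_tau z ^^ n) a k = (ca_tau z ^^ n) a i"
proof -
  have Hi: "\<forall>t\<le>n. a (i + int t) = a i" and Ti: "(ca_tau z ^^ n) a i = a i"
    using hi unfolding taun_closed by (auto split: if_splits)
  have Hj: "\<forall>t\<le>n. a (j + int t) = a j"
    using hj unfolding taun_closed by (auto split: if_splits)
  have aji: "a j = a i" using Hi[rule_format, of "nat (j - i)"] ik kj ji by simp
  have cl: "a s = a i" if "i \<le> s" "s \<le> j + int n" for s
  proof (cases "s \<le> i + int n")
    case True
    then show ?thesis using Hi[rule_format, of "nat (s - i)"] that by simp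
  next
    case False
    then have "j \<le> s" using ji by simp
    then show ?thesis using Hj[rule_format, of "nat (s - j)"] that aji by simp
  qed
  have "\<forall>t\<le>n. a (k + int t) = a k"
  proof (intro allI impI)
    fix t assume "t \<le> n"
    then have "a (k + int t) = a i" using ik kj by (intro cl) auto
    moreover have "a k = a i" using ik kj by (intro cl) auto
    ultimately show "a (k + int t) = a k" by simp
  qed
  then have "(ca_tau z ^^ n) a k = a k" unfolding taun_closed by simp
  also have "a k = a i" using ik kj by (intro cl) auto
  finally show ?thesis using Ti by simp
qed

lemma word_count:
  fixes z :: 'a
  assumes n1: "n \<ge> 1"
  shows "(\<lambda>i\<in>{..<n}. (ca_tau z ^^ n) a (int i)) \<in>
    (\<lambda>(c,p,q). \<lambda>i\<in>{..<n}. if p \<le> i \<and> i \<le> q then c else z) ` (UNIV \<times> {..<n} \<times> {..<n})"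
proof -
  let ?T = "(ca_tau z ^^ n) a"
  define S0 where "S0 = {i. i < n \<and> ?T (int i) \<noteq> z}"
  have finS: "finite S0" unfolding S0_def by simp
  show ?thesis
  proof (cases "S0 = {}")
    case True
    have "(\<lambda>i\<in>{..<n}. ?T (int i)) = (\<lambda>i\<in>{..<n}. if 0 \<le> i \<and> i \<le> (0::nat) then z else z)"
    proof (rule restrict_ext)
      fix i assume "i \<in> {..<n}"
      then show "?T (int i) = (if 0 \<le> i \<and> i \<le> (0::nat) then z else z)"
        using True unfolding S0_def by auto
    qed
    moreover have "n > 0" using n1 by simp
    ultimately show ?thesis
      by (intro image_eqI[where x="(z, 0, 0)"]) auto
  next
    case False
    define p where "p = Min S0"
    define q where "q = Max S0"
    have pS: "p \<in> S0" unfolding p_def using False finS by simp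
    have qS: "q \<in> S0" unfolding q_def using False finS by simp
    have pmin: "\<And>i. i \<in> S0 \<Longrightarrow> p \<le> i" unfolding p_def using finS by simp
    have qmax: "\<And>i. i \<in> S0 \<Longrightarrow> i \<le> q" unfolding q_def using finS by simp
    have pn: "p < n" "?T (int p) \<noteq> z" using pS unfolding S0_def by auto
    have qn: "q < n" "?T (int q) \<noteq> z" using qS unfolding S0_def by auto
    have "(\<lambda>i\<in>{..<n}. ?T (int i)) = (\<lambda>i\<in>{..<n}. if p \<le> i \<and> i \<le> q then ?T (int p) else z)"
    proof (rule restrict_ext)
      fix i assume i: "i \<in> {..<n}"
      show "?T (int i) = (if p \<le> i \<and> i \<le> q then ?T (int p) else z)"
      proof (cases "p \<le> i \<and> i \<le> q")
        case True
        then show ?thesis using run_lemma[OF pn(2) qn(2), of "int i"] qn(1) by simp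
      next
        case False
        then have "i \<notin> S0" using pmin qmax by force
        then show ?thesis using i False unfolding S0_def by auto
      qed
    qed
    then show ?thesis using pn qn
      by (intro image_eqI[where x="(?T (int p), p, q)"]) auto
  qed
qed

lemma shift_inv_pow:
  assumes "prob_space \<nu>" "lshift \<in> \<nu> \<rightarrow>\<^sub>M \<nu>" "distr \<nu> \<nu> lshift = \<nu>"
  shows "simple_function \<nu> X \<Longrightarrow> shannon_entropy \<nu> (\<lambda>a. X ((lshift ^^ m) a)) = shannon_entropy \<nu> X"
proof (induction m arbitrary: X)
  case 0
  then show ?case by simp
next
  case (Suc m)
  have s: "simple_function \<nu> (\<lambda>a. X (lshift a))" by (rule simple_function_comp[OF assms(2) Suc.prems])
  have "shannon_entropy \<nu> (\<lambda>a. X ((lshift ^^ Suc m) a)) = shannon_entropy \<nu> (\<lambda>a. (\<lambda>a. X (lshift a)) ((lshift ^^ m) a))"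
    by simp
  also have "\<dots> = shannon_entropy \<nu> (\<lambda>a. X (lshift a))" by (rule Suc.IH[OF s])
  also have "\<dots> = shannon_entropy \<nu> X" by (rule sh_shift[OF assms(1) Suc.prems assms(2,3)])
  finally show ?case .
qed



theorem proposition4p1:
  fixes \<nu> :: "(int \<Rightarrow> 'a::finite) measure" and z :: 'a and n :: nat
  assumes "prob_space \<nu>"
    and "sets \<nu> = sets (PiM UNIV (\<lambda>_. count_space UNIV))"
    and "lshift \<in> \<nu> \<rightarrow>\<^sub>M \<nu>"
    and "distr \<nu> \<nu> lshift = \<nu>"
    and "n \<ge> 1"
  shows "process_entropy \<nu> lshift (\<lambda>a. ((ca_tau z) ^^ n) a 0)
           \<le> ln (real CARD('a) * (real n)\<^sup>2) / real n"
proof -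
  interpret P: prob_space \<nu> by fact
  define B where "B m = (\<lambda>a. \<lambda>i\<in>{..<m}. (ca_tau z ^^ n) a (int i))" for m
  define b where "b m = shannon_entropy \<nu> (B m)" for m
  have simpB: "simple_function \<nu> (B m)" for m
    unfolding B_def by (rule simple_block[OF assms(2)]) simp
  have nn: "b m \<ge> 0" for m unfolding b_def by (rule sh_nonneg[OF assms(1)])
  have sub: "b (m + k) \<le> b m + b k" for m k
  proof -
    define \<phi> where "\<phi> = (\<lambda>(u::nat \<Rightarrow> 'a, v::nat \<Rightarrow> 'a). \<lambda>i\<in>{..<m+k}. if i < m then u i else v (i - m))"
    have Bk: "(\<lambda>a. B k ((lshift ^^ m) a)) = (\<lambda>a. \<lambda>i\<in>{..<k}. (ca_tau z ^^ n) a (int i + int m))"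
      unfolding B_def taun_shiftk unfolding lshift_pow by simp
    have sBk: "simple_function \<nu> (\<lambda>a. B k ((lshift ^^ m) a))"
      unfolding Bk by (rule simple_block[OF assms(2)]) simp
    have eq: "B (m + k) = (\<lambda>a. \<phi> (B m a, B k ((lshift ^^ m) a)))"
    proof
      fix a
      show "B (m + k) a = \<phi> (B m a, B k ((lshift ^^ m) a))"
        unfolding \<phi>_def B_def taun_shiftk unfolding lshift_pow by (auto simp: fun_eq_iff)
    qed
    have "b (m + k) = shannon_entropy \<nu> (\<lambda>a. \<phi> (B m a, B k ((lshift ^^ m) a)))"
      unfolding b_def eq ..
    also have "\<dots> \<le> shannon_entropy \<nu> (\<lambda>a. (B m a, B k ((lshift ^^ m) a)))"
      by (rule P.sh_comp) (rule simple_function_Pair[OF simpB sBk])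
    also have "\<dots> \<le> b m + shannon_entropy \<nu> (\<lambda>a. B k ((lshift ^^ m) a))"
      unfolding b_def by (rule P.sh_pair[OF simpB sBk])
    also have "shannon_entropy \<nu> (\<lambda>a. B k ((lshift ^^ m) a)) = b k"
      unfolding b_def by (rule shift_inv_pow[OF assms(1,3,4) simpB])
    finally show ?thesis .
  qed
  define L where "L = Inf ((\<lambda>m. b m / m) ` {1..})"
  have fek: "(\<lambda>m. b m / m) \<longlonglongrightarrow> L"
    unfolding L_def by (rule fekete[OF sub nn])
  have seq: "(\<lambda>m. shannon_entropy \<nu> (\<lambda>a. \<lambda>i\<in>{0..m}. (ca_tau z ^^ n) ((lshift ^^ i) a) 0) / real m)
      = (\<lambda>m. b (Suc m) / real m)"
  proof
    fix m
    have "(\<lambda>a. \<lambda>i\<in>{0..m}. (ca_tau z ^^ n) ((lshift ^^ i) a) 0) = B (Suc m)"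
      unfolding B_def taun_shiftk unfolding lshift_pow by (auto simp: fun_eq_iff lessThan_Suc_atMost atLeast0AtMost)
    then show "shannon_entropy \<nu> (\<lambda>a. \<lambda>i\<in>{0..m}. (ca_tau z ^^ n) ((lshift ^^ i) a) 0) / real m = b (Suc m) / real m"
      unfolding b_def by simp
  qed
  have conv: "(\<lambda>m. b (Suc m) / real m) \<longlonglongrightarrow> L"
  proof -
    have "(\<lambda>m. b (Suc m) / real (Suc m) * (real (Suc m) / real m)) \<longlonglongrightarrow> L * 1"
      by (intro tendsto_mult LIMSEQ_Suc_n_over_n) (rule LIMSEQ_Suc[OF fek])
    moreover have "b (Suc m) / real (Suc m) * (real (Suc m) / real m) = b (Suc m) / real m" for m
    proof (cases "m = 0")
      case False
      have "real (Suc m) \<noteq> 0" "real m \<noteq> 0" using False by simp_all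
      then show ?thesis by (simp add: field_simps del: of_nat_Suc)
    qed simp
    ultimately show ?thesis by simp
  qed
  have limL: "process_entropy \<nu> lshift (\<lambda>a. ((ca_tau z) ^^ n) a 0) = L"
    unfolding process_entropy_def seq using conv by (rule limI)
  have bdd: "bdd_below ((\<lambda>m. b m / m) ` {1..})"
    by (rule bdd_belowI[of _ 0]) (auto simp: nn)
  have mem: "b n / real n \<in> (\<lambda>m. b m / real m) ` {1..}"
    using assms(5) by (intro image_eqI[where x=n]) simp_all
  have Lle: "L \<le> b n / n" unfolding L_def by (rule cInf_lower[OF mem bdd])
  define R where "R = (\<lambda>(c,p,q). \<lambda>i\<in>{..<n}. if p \<le> i \<and> i \<le> q then c else z) ` (UNIV \<times> {..<n} \<times> {..<n})"
  have subR: "B n ` space \<nu> \<subseteq> R"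
  proof
    fix x assume "x \<in> B n ` space \<nu>"
    then obtain a where "x = B n a" by auto
    then show "x \<in> R" unfolding R_def B_def using word_count[OF assms(5), of z a] by simp
  qed
  have finR: "finite R" unfolding R_def by simp
  have cardR: "card R \<le> CARD('a) * n\<^sup>2"
  proof -
    have "card R \<le> card (UNIV \<times> {..<n} \<times> {..<n} :: ('a \<times> nat \<times> nat) set)"
      unfolding R_def by (rule card_image_le) simp
    also have "\<dots> = CARD('a) * n\<^sup>2" by (simp add: card_cartesian_product power2_eq_square)
    finally show ?thesis .
  qed
  have cpos: "card (B n ` space \<nu>) > 0"
    using P.not_empty finite_subset[OF subR finR] by (simp add: card_gt_0_iff)
  have "b n \<le> ln (card (B n ` space \<nu>))" unfolding b_def by (rule P.sh_le_card[OF simpB])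
  also have "\<dots> \<le> ln (real CARD('a) * (real n)\<^sup>2)"
  proof -
    have "card (B n ` space \<nu>) \<le> card R" by (rule card_mono[OF finR subR])
    then have "real (card (B n ` space \<nu>)) \<le> real CARD('a) * (real n)\<^sup>2"
      using cardR by (metis of_nat_le_iff of_nat_mult of_nat_power le_trans)
    then show ?thesis using cpos by simp
  qed
  finally have "b n / n \<le> ln (real CARD('a) * (real n)\<^sup>2) / n"
    by (rule divide_right_mono) simp
  then show ?thesis using limL Lle by simp
qed


end
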